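(* Let $\mathcal{CB}(\mathcal{C},\mathcal{W}_t,\mathcal{W}_r)$ be a cellular blind interference alignment problem under sufficient coherence and let $\mathcal{GIC}(\mathcal{W}_r,\overline{\mathcal{W}}_r)$ be the corresponding Gaussian index coding problem, i.e., with the same desired message sets $\mathcal{W}_r$ and $\overline{\mathcal{W}}_r=\bigcup_{t\in\mathcal{T}:\,c_{rt}=0}\mathcal{W}_t$ for every receiver $r$. Then the maximum DoF achievable through linear beamforming in the Gaussian index coding problem equals the maximum DoF achievable through linear beamforming in the cellular blind interference alignment problem.
   Context: CB problem: transmitters $\mathcal{T}$, receivers $\mathcal{R}$, independent messages $\mathcal{W}$; transmitter $t$ holds $\mathcal{W}_t$ (pairwise disjoint, union $\mathcal{W}$); receiver $r$ desires $\mathcal{W}_r$; fixed connectivity $c_{rt}\in\{0,1\}$, $\mathcal{C}=\{(r,t):c_{rt}=1\}$. Single-antenna nodes; receiver $r$ observes $Y_r(n)=\sum_t c_{rt}H_{rt}(n)X_t(n)+Z_r(n)$ with unit-variance circularly symmetric complex Gaussian noise, power constraint $P$, nonzero channel coefficients (magnitudes bounded away from $0$ and $\infty$) known to the receiver for connected transmitters and unknown to transmitters (no CSIT). Sufficient coherence: the network coherence time may be taken as large as needed, so that all channel coefficients are constant over the $T$ channel uses of any scheme considered. GIC problem: one single-antenna transmitter knowing all messages, receiver $r$ observes $Y_r(n)=X(n)+Z_r(n)$, knows $\overline{\mathcal{W}}_r$ a priori, desires $\mathcal{W}_r$. Linear beamforming over $T$ channel uses: each message $W$ is assigned $d_W$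 information symbols sent along the columns of a $T\times d_W$ complex beamforming matrix $V_W$ (not depending on channel realizations), the transmitted signals of all messages being linearly superimposed (in CB, each message is sent by the transmitter where it originates). At receiver $r$, the interfering messages are those neither desired nor known a priori (in GIC: not in $\mathcal{W}_r\cup\overline{\mathcal{W}}_r$; in CB: messages from transmitters $t$ with $c_{rt}=1$ not in $\mathcal{W}_r$), and the scheme is feasible if at every receiver the columns of the (received, channel-scaled) beamforming matrices of its desired messages are linearly independent of each other and of the span of the received beamforming columns of its interfering messages. The DoF of such a scheme is $\sum_W d_W/T$; the maximum linear-beamforming DoF is the supremum over $T$ and feasible schemes. *)

theory Defs
  imports Complex_Main "HOL-Library.Extended_Real"
begin

text \<open>A scheme is a triple (T, d, V):
  d W is the number of information symbols of message W, and V W j k is the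
  entry in row k (channel use k < T) of column j (j < d W) of the
  T x (d W) beamforming matrix of message W.  Vectors are functions
  nat => complex of which only the entries k < T are relevant.\<close>

definition indep_of_span ::
  "('i \<Rightarrow> nat \<Rightarrow> complex) \<Rightarrow> 'i set \<Rightarrow> ('j \<Rightarrow> nat \<Rightarrow> complex) \<Rightarrow> 'j set \<Rightarrow> nat \<Rightarrow> bool" where
  "indep_of_span u I v J T \<longleftrightarrow>
     (\<forall>a b. (\<forall>k<T. (\<Sum>i\<in>I. a i * u i k) + (\<Sum>j\<in>J. b j * v j k) = 0)
            \<longrightarrow> (\<forall>i\<in>I. a i = 0))"

definition cols :: "('w \<Rightarrow> nat) \<Rightarrow> 'w set \<Rightarrow> ('w \<times> nat) set" where
  "cols d S = (SIGMA W:S. {..<d W})"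

definition gic_feasible ::
  "('r \<Rightarrow> 'w set) \<Rightarrow> ('r \<Rightarrow> 'w set) \<Rightarrow> nat \<Rightarrow> ('w \<Rightarrow> nat) \<Rightarrow> ('w \<Rightarrow> nat \<Rightarrow> nat \<Rightarrow> complex) \<Rightarrow> bool" where
  "gic_feasible des known T d V \<longleftrightarrow>
     (\<forall>r. indep_of_span (\<lambda>(W,j) k. V W j k) (cols d (des r))
                        (\<lambda>(W,j) k. V W j k) (cols d {W. W \<notin> des r \<and> W \<notin> known r}) T)"

text \<open>CB: message W originates at transmitter orig W; c r t is the connectivity;
  channel coefficients H r t (nonzero, constant over the T channel uses, unknown to
  the transmitters, so V must work for every channel realization).  The received
  column is c_{rt} H_{rt} times the transmitted column.\<close>
definition cb_feasible ::
  "('r \<Rightarrow> 't \<Rightarrow> bool) \<Rightarrow> ('w \<Rightarrow> 't) \<Rightarrow> ('r \<Rightarrow> 'w set) \<Rightarrow> nat \<Rightarrow> ('w \<Rightarrow> nat) \<Rightarrow> ('w \<Rightarrow> nat \<Rightarrow> nat \<Rightarrow> complex) \<Rightarrow> bool" where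
  "cb_feasible c orig des T d V \<longleftrightarrow>
     (\<forall>H::'r \<Rightarrow> 't \<Rightarrow> complex. (\<forall>r t. H r t \<noteq> 0) \<longrightarrow>
       (\<forall>r. indep_of_span
              (\<lambda>(W,j) k. (if c r (orig W) then H r (orig W) else 0) * V W j k) (cols d (des r))
              (\<lambda>(W,j) k. H r (orig W) * V W j k) (cols d {W. c r (orig W) \<and> W \<notin> des r}) T))"

definition max_lin_dof ::
  "(nat \<Rightarrow> ('w::finite \<Rightarrow> nat) \<Rightarrow> ('w \<Rightarrow> nat \<Rightarrow> nat \<Rightarrow> complex) \<Rightarrow> bool) \<Rightarrow> ereal" where
  "max_lin_dof feasible =
     (SUP s \<in> {(T, d, V). 0 < T \<and> feasible T d V}.
        ereal (real (\<Sum>W\<in>UNIV. fst (snd s) W) / real (fst s)))"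

end

theory Submission
  imports Defs
begin

lemma indep_scale:
  assumes "indep_of_span u I v J T" "\<forall>i\<in>I. f i \<noteq> (0::complex)"
    "\<forall>i\<in>I. \<forall>k. u' i k = f i * u i k" "\<forall>j\<in>J. \<forall>k. v' j k = g j * v j k"
  shows "indep_of_span u' I v' J T"
  unfolding indep_of_span_def
proof (intro allI impI ballI)
  fix a b i assume H: "\<forall>k<T. (\<Sum>i\<in>I. a i * u' i k) + (\<Sum>j\<in>J. b j * v' j k) = 0" and i: "i \<in> I"
  have "\<forall>k<T. (\<Sum>i\<in>I. (a i * f i) * u i k) + (\<Sum>j\<in>J. (b j * g j) * v j k) = 0"
  proof (intro allI impI)
    fix k assume k: "k < T"
    have "(\<Sum>i\<in>I. (a i * f i) * u i k) = (\<Sum>i\<in>I. a i * u' i k)"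
      using assms(3) by (intro sum.cong) (auto simp: mult.assoc)
    moreover have "(\<Sum>j\<in>J. (b j * g j) * v j k) = (\<Sum>j\<in>J. b j * v' j k)"
      using assms(4) by (intro sum.cong) (auto simp: mult.assoc)
    ultimately show "(\<Sum>i\<in>I. (a i * f i) * u i k) + (\<Sum>j\<in>J. (b j * g j) * v j k) = 0"
      using H k by simp
  qed
  then have "a i * f i = 0"
  proof -
    assume K: "\<forall>k<T. (\<Sum>i\<in>I. a i * f i * u i k) + (\<Sum>j\<in>J. b j * g j * v j k) = 0"
    have "\<forall>i\<in>I. (\<lambda>i. a i * f i) i = 0"
      using assms(1)[unfolded indep_of_span_def, rule_format, of "\<lambda>i. a i * f i" "\<lambda>j. b j * g j"] K by blast
    then show ?thesis using i by simp
  qed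
  then show "a i = 0" using assms(2) i by simp
qed

lemma feas_eq:
  fixes c :: "'r::finite \<Rightarrow> 't::finite \<Rightarrow> bool"
    and orig :: "'w::finite \<Rightarrow> 't"
    and des :: "'r \<Rightarrow> 'w set"
  assumes A: "\<forall>r. \<forall>W\<in>des r. c r (orig W)"
  shows "gic_feasible des (\<lambda>r. \<Union>t\<in>{t. \<not> c r t}. {W. orig W = t}) T d V
       = cb_feasible c orig des T d V"
proof -
  have S: "{W. W \<notin> des r \<and> W \<notin> (\<Union>t\<in>{t. \<not> c r t}. {W. orig W = t})}
         = {W. c r (orig W) \<and> W \<notin> des r}" for r by auto
  have key: "indep_of_span (\<lambda>(W,j) k. V W j k) (cols d (des r))
                        (\<lambda>(W,j) k. V W j k) (cols d {W. c r (orig W) \<and> W \<notin> des r}) T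
    \<longleftrightarrow> indep_of_span
              (\<lambda>(W,j) k. (if c r (orig W) then H r (orig W) else 0) * V W j k) (cols d (des r))
              (\<lambda>(W,j) k. H r (orig W) * V W j k) (cols d {W. c r (orig W) \<and> W \<notin> des r}) T"
    if Hn: "\<forall>r t. H r t \<noteq> 0" for H :: "'r \<Rightarrow> 't \<Rightarrow> complex" and r
  proof
    assume I: "indep_of_span (\<lambda>(W,j) k. V W j k) (cols d (des r))
                        (\<lambda>(W,j) k. V W j k) (cols d {W. c r (orig W) \<and> W \<notin> des r}) T"
    have f0: "\<forall>i\<in>cols d (des r). (\<lambda>(W,j). H r (orig W)) i \<noteq> 0"
      using Hn by (auto simp: cols_def)
    have ue: "\<forall>i\<in>cols d (des r). \<forall>k. (\<lambda>(W,j) k. (if c r (orig W) then H r (orig W) else 0) * V W j k) i k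
        = (\<lambda>(W,j). H r (orig W)) i * (\<lambda>(W,j) k. V W j k) i k"
    proof (intro ballI allI)
      fix i k assume "i \<in> cols d (des r)"
      then obtain W j where "i = (W,j)" "W \<in> des r" by (auto simp: cols_def)
      then show "(\<lambda>(W,j) k. (if c r (orig W) then H r (orig W) else 0) * V W j k) i k
        = (\<lambda>(W,j). H r (orig W)) i * (\<lambda>(W,j) k. V W j k) i k" using A by simp
    qed
    have ve: "\<forall>i\<in>cols d {W. c r (orig W) \<and> W \<notin> des r}. \<forall>k. (\<lambda>(W,j) k. H r (orig W) * V W j k) i k
        = (\<lambda>(W,j). H r (orig W)) i * (\<lambda>(W,j) k. V W j k) i k"
      by (simp add: split_beta)
    show "indep_of_span
              (\<lambda>(W,j) k. (if c r (orig W) then H r (orig W) else 0) * V W j k) (cols d (des r))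
              (\<lambda>(W,j) k. H r (orig W) * V W j k) (cols d {W. c r (orig W) \<and> W \<notin> des r}) T"
      by (rule indep_scale[OF I f0 ue ve])
  next
    assume I: "indep_of_span
              (\<lambda>(W,j) k. (if c r (orig W) then H r (orig W) else 0) * V W j k) (cols d (des r))
              (\<lambda>(W,j) k. H r (orig W) * V W j k) (cols d {W. c r (orig W) \<and> W \<notin> des r}) T"
    have f0: "\<forall>i\<in>cols d (des r). (\<lambda>(W,j). inverse (H r (orig W))) i \<noteq> 0"
      using Hn by (auto simp: cols_def)
    have ue: "\<forall>i\<in>cols d (des r). \<forall>k. (\<lambda>(W,j) k. V W j k) i k
        = (\<lambda>(W,j). inverse (H r (orig W))) i * (\<lambda>(W,j) k. (if c r (orig W) then H r (orig W) else 0) * V W j k) i k"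
    proof (intro ballI allI)
      fix i k assume "i \<in> cols d (des r)"
      then obtain W j where "i = (W,j)" "W \<in> des r" by (auto simp: cols_def)
      then show "(\<lambda>(W,j) k. V W j k) i k
        = (\<lambda>(W,j). inverse (H r (orig W))) i * (\<lambda>(W,j) k. (if c r (orig W) then H r (orig W) else 0) * V W j k) i k"
        using A Hn by simp
    qed
    have ve: "\<forall>i\<in>cols d {W. c r (orig W) \<and> W \<notin> des r}. \<forall>k. (\<lambda>(W,j) k. V W j k) i k
        = (\<lambda>(W,j). inverse (H r (orig W))) i * (\<lambda>(W,j) k. H r (orig W) * V W j k) i k"
      using Hn by (simp add: split_beta)
    show "indep_of_span (\<lambda>(W,j) k. V W j k) (cols d (des r))
                        (\<lambda>(W,j) k. V W j k) (cols d {W. c r (orig W) \<and> W \<notin> des r}) T"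
      by (rule indep_scale[OF I f0 ue ve])
  qed
  have one: "\<forall>r t. (\<lambda>r t. 1::complex) r t \<noteq> 0" by simp
  show ?thesis
    unfolding gic_feasible_def S cb_feasible_def
  proof
    assume G: "\<forall>r. indep_of_span (\<lambda>(W,j) k. V W j k) (cols d (des r))
                        (\<lambda>(W,j) k. V W j k) (cols d {W. c r (orig W) \<and> W \<notin> des r}) T"
    show "\<forall>H::'r \<Rightarrow> 't \<Rightarrow> complex. (\<forall>r t. H r t \<noteq> 0) \<longrightarrow>
       (\<forall>r. indep_of_span
              (\<lambda>(W,j) k. (if c r (orig W) then H r (orig W) else 0) * V W j k) (cols d (des r))
              (\<lambda>(W,j) k. H r (orig W) * V W j k) (cols d {W. c r (orig W) \<and> W \<notin> des r}) T)"
    proof (intro allI impI)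
      fix H :: "'r \<Rightarrow> 't \<Rightarrow> complex" and r assume Hn: "\<forall>r t. H r t \<noteq> 0"
      show "indep_of_span
              (\<lambda>(W,j) k. (if c r (orig W) then H r (orig W) else 0) * V W j k) (cols d (des r))
              (\<lambda>(W,j) k. H r (orig W) * V W j k) (cols d {W. c r (orig W) \<and> W \<notin> des r}) T"
        using key[OF Hn, of r] G by blast
    qed
  next
    assume C: "\<forall>H::'r \<Rightarrow> 't \<Rightarrow> complex. (\<forall>r t. H r t \<noteq> 0) \<longrightarrow>
       (\<forall>r. indep_of_span
              (\<lambda>(W,j) k. (if c r (orig W) then H r (orig W) else 0) * V W j k) (cols d (des r))
              (\<lambda>(W,j) k. H r (orig W) * V W j k) (cols d {W. c r (orig W) \<and> W \<notin> des r}) T)"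
    show "\<forall>r. indep_of_span (\<lambda>(W,j) k. V W j k) (cols d (des r))
                        (\<lambda>(W,j) k. V W j k) (cols d {W. c r (orig W) \<and> W \<notin> des r}) T"
    proof
      fix r
      have C1: "indep_of_span
              (\<lambda>(W,j) k. (if c r (orig W) then (\<lambda>r t. 1::complex) r (orig W) else 0) * V W j k) (cols d (des r))
              (\<lambda>(W,j) k. (\<lambda>r t. 1::complex) r (orig W) * V W j k) (cols d {W. c r (orig W) \<and> W \<notin> des r}) T"
        using spec[OF C, of "\<lambda>r t. 1::complex"] one by blast
      show "indep_of_span (\<lambda>(W,j) k. V W j k) (cols d (des r))
                        (\<lambda>(W,j) k. V W j k) (cols d {W. c r (orig W) \<and> W \<notin> des r}) T"
        using key[OF one, of r] C1 by blast
    qed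
  qed
qed

theorem theorem9:
  fixes c :: "'r::finite \<Rightarrow> 't::finite \<Rightarrow> bool"
    and orig :: "'w::finite \<Rightarrow> 't"
    and des :: "'r \<Rightarrow> 'w set"
  assumes "\<forall>r. \<forall>W\<in>des r. c r (orig W)"
  shows "max_lin_dof (gic_feasible des (\<lambda>r. \<Union>t\<in>{t. \<not> c r t}. {W. orig W = t}))
       = max_lin_dof (cb_feasible c orig des)"
proof -
  have "gic_feasible des (\<lambda>r. \<Union>t\<in>{t. \<not> c r t}. {W. orig W = t}) = cb_feasible c orig des"
    using feas_eq[of des c orig, OF assms] by (intro ext) blast
  then show ?thesis by simp
qed

end
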